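(* Let $R$ be a ring with identity and $a,b,c,\alpha\in R$ such that $a$ has a $(b,c)$-inverse $a^\otimes$. The following are equivalent: (i) $\alpha$ is right $(b,c)$-invertible; (ii) $\alpha$ is left annihilator $(b,c)$-invertible; (iii) $1+(\alpha-a)a^\otimes$ is right invertible; (iv) $1+a^\otimes(\alpha-a)$ is right invertible.
   Context: For $x\in R$: $xR=\{xr:r\in R\}$, $Rx=\{rx:r\in R\}$, ${}^\circ x=\{r: rx=0\}$. $a$ is $(b,c)$-invertible if there is $y\in R$ with $y\in (bRy)\cap(yRc)$, $yab=b$, $cay=c$; such $y$ is unique, denoted $a^\otimes$. $\alpha$ is right $(b,c)$-invertible if there is $y$ with $yR\subseteq bR$ and $c\alpha y=c$; left annihilator $(b,c)$-invertible if there is $y$ with ${}^\circ b\subseteq {}^\circ y$ and $c\alpha y=c$. *)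

theory Defs
  imports Main
begin

definition left_ann :: "'a::ring_1 \<Rightarrow> 'a set" where
  "left_ann x = {r. r * x = 0}"

definition is_bc_inverse :: "'a::ring_1 \<Rightarrow> 'a \<Rightarrow> 'a \<Rightarrow> 'a \<Rightarrow> bool" where
  "is_bc_inverse a b c y \<longleftrightarrow>
     (\<exists>r. y = b * r * y) \<and> (\<exists>s. y = y * s * c) \<and> y * a * b = b \<and> c * a * y = c"

definition bc_invertible :: "'a::ring_1 \<Rightarrow> 'a \<Rightarrow> 'a \<Rightarrow> bool" where
  "bc_invertible a b c \<longleftrightarrow> (\<exists>y. is_bc_inverse a b c y)"

definition bc_inv :: "'a::ring_1 \<Rightarrow> 'a \<Rightarrow> 'a \<Rightarrow> 'a" where
  "bc_inv a b c = (THE y. is_bc_inverse a b c y)"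

definition right_bc_invertible :: "'a::ring_1 \<Rightarrow> 'a \<Rightarrow> 'a \<Rightarrow> bool" where
  "right_bc_invertible \<alpha> b c \<longleftrightarrow>
     (\<exists>y. {y * r | r. True} \<subseteq> {b * r | r. True} \<and> c * \<alpha> * y = c)"

definition left_ann_bc_invertible :: "'a::ring_1 \<Rightarrow> 'a \<Rightarrow> 'a \<Rightarrow> bool" where
  "left_ann_bc_invertible \<alpha> b c \<longleftrightarrow>
     (\<exists>y. left_ann b \<subseteq> left_ann y \<and> c * \<alpha> * y = c)"

definition right_invertible :: "'a::ring_1 \<Rightarrow> bool" where
  "right_invertible x \<longleftrightarrow> (\<exists>z. x * z = 1)"

end

theory Submission
  imports Defs
begin

lemma bc_unique:
  fixes a b c :: "'a::ring_1"
  assumes "is_bc_inverse a b c y1" "is_bc_inverse a b c y2"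
  shows "y1 = y2"
proof -
  obtain s1 where s1: "y1 = y1 * s1 * c" and c2: "c * a * y2 = c"
    using assms unfolding is_bc_inverse_def by blast
  obtain r2 where r2: "y2 = b * r2 * y2" and b1: "y1 * a * b = b"
    using assms unfolding is_bc_inverse_def by blast
  have "y1 = y1 * s1 * (c * a * y2)" using s1 c2 by simp
  also have "\<dots> = (y1 * s1 * c) * a * y2" by (simp add: mult.assoc)
  also have "\<dots> = y1 * a * y2" using s1 by simp
  finally have e1: "y1 = y1 * a * y2" .
  have "y2 = (y1 * a * b) * r2 * y2" using r2 b1 by simp
  also have "\<dots> = y1 * a * (b * r2 * y2)" by (simp add: mult.assoc)
  finally have "y2 = y1 * a * y2" using r2 by simp
  with e1 show ?thesis by simp
qed

lemma main:
  fixes a b c \<alpha> y :: "'a::ring_1"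
  assumes "is_bc_inverse a b c y"
  shows "(right_bc_invertible \<alpha> b c \<longleftrightarrow> left_ann_bc_invertible \<alpha> b c)
       \<and> (left_ann_bc_invertible \<alpha> b c \<longleftrightarrow> right_invertible (1 + (\<alpha> - a) * y))
       \<and> (right_invertible (1 + (\<alpha> - a) * y) \<longleftrightarrow> right_invertible (1 + y * (\<alpha> - a)))"
proof -
  obtain r s where r: "y = b * r * y" and s: "y = y * s * c" and yab: "y * a * b = b"
    and cay: "c * a * y = c"
    using assms unfolding is_bc_inverse_def by blast
  have yay: "y * a * y = y"
  proof -
    have "y * a * y = (y * a * b) * r * y" using r by (simp add: mult.assoc)
    also have "\<dots> = y" using yab r by simp
    finally show ?thesis .
  qed
  have ann_iff: "left_ann b \<subseteq> left_ann z \<longleftrightarrow> (\<exists>t. z = b * t)" for z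
  proof
    assume h: "left_ann b \<subseteq> left_ann z"
    have "(1 - y * a) * b = 0" using yab by (simp add: algebra_simps)
    hence "(1 - y * a) * z = 0" using h unfolding left_ann_def by blast
    hence "z = y * a * z" by (simp add: algebra_simps)
    also have "\<dots> = b * (r * y * a * z)" using r by (metis mult.assoc)
    finally show "\<exists>t. z = b * t" by blast
  next
    assume "\<exists>t. z = b * t"
    then obtain t where "z = b * t" by blast
    thus "left_ann b \<subseteq> left_ann z" unfolding left_ann_def by (auto simp: mult.assoc[symmetric])
  qed
  have img_iff: "{z * r | r. True} \<subseteq> {b * r | r. True} \<longleftrightarrow> (\<exists>t. z = b * t)" for z
  proof
    assume "{z * r | r. True} \<subseteq> {b * r | r. True}"
    hence "z * 1 \<in> {b * r | r. True}" by blast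
    thus "\<exists>t. z = b * t" by auto
  next
    assume "\<exists>t. z = b * t"
    then obtain t where "z = b * t" by blast
    thus "{z * r | r. True} \<subseteq> {b * r | r. True}" by (auto simp: mult.assoc)
  qed
  have A: "right_bc_invertible \<alpha> b c \<longleftrightarrow> left_ann_bc_invertible \<alpha> b c"
    unfolding right_bc_invertible_def left_ann_bc_invertible_def ann_iff img_iff by simp
  have B: "left_ann_bc_invertible \<alpha> b c \<longleftrightarrow> right_invertible (1 + (\<alpha> - a) * y)"
  proof
    assume "left_ann_bc_invertible \<alpha> b c"
    then obtain z t where zt: "z = b * t" and caz: "c * \<alpha> * z = c"
      unfolding left_ann_bc_invertible_def ann_iff by blast
    have yaz: "y * a * z = z" using zt yab by (metis mult.assoc)
    have yaz2: "y * \<alpha> * z = y"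
    proof -
      have "y * \<alpha> * z = y * s * (c * \<alpha> * z)" using s by (metis mult.assoc)
      also have "\<dots> = y" using caz s by simp
      finally show ?thesis .
    qed
    have "(1 + (\<alpha> - a) * y) * (1 - (\<alpha> - a) * z) =
          1 - (\<alpha> - a) * z + (\<alpha> - a) * y - (\<alpha> - a) * (y * \<alpha> * z - y * a * z)"
      by (simp add: algebra_simps)
    also have "\<dots> = 1" using yaz yaz2 by (simp add: algebra_simps)
    finally show "right_invertible (1 + (\<alpha> - a) * y)"
      unfolding right_invertible_def by blast
  next
    assume "right_invertible (1 + (\<alpha> - a) * y)"
    then obtain w where w: "(1 + (\<alpha> - a) * y) * w = 1" unfolding right_invertible_def by blast
    have "c * (1 + (\<alpha> - a) * y) = c * \<alpha> * y"
      using cay by (simp add: algebra_simps)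
    hence "c * \<alpha> * (y * w) = c" using w by (metis mult.assoc mult_1_right)
    moreover have "y * w = b * (r * y * w)" using r by (metis mult.assoc)
    ultimately show "left_ann_bc_invertible \<alpha> b c"
      unfolding left_ann_bc_invertible_def ann_iff by blast
  qed
  have jac: "right_invertible (1 + u * v) \<Longrightarrow> right_invertible (1 + v * u)" for u v :: 'a
  proof -
    assume "right_invertible (1 + u * v)"
    then obtain w where w: "(1 + u * v) * w = 1" unfolding right_invertible_def by blast
    have "(1 + v * u) * (1 - v * w * u) = 1 + v * u - v * ((1 + u * v) * w) * u"
      by (simp add: algebra_simps)
    also have "\<dots> = 1" using w by simp
    finally show ?thesis unfolding right_invertible_def by blast
  qed
  have C: "right_invertible (1 + (\<alpha> - a) * y) \<longleftrightarrow> right_invertible (1 + y * (\<alpha> - a))"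
    using jac by blast
  show ?thesis using A B C by blast
qed

theorem theorem4p3:
  fixes a b c \<alpha> :: "'a::ring_1"
  assumes "bc_invertible a b c"
  shows "(right_bc_invertible \<alpha> b c \<longleftrightarrow> left_ann_bc_invertible \<alpha> b c)
       \<and> (left_ann_bc_invertible \<alpha> b c \<longleftrightarrow> right_invertible (1 + (\<alpha> - a) * bc_inv a b c))
       \<and> (right_invertible (1 + (\<alpha> - a) * bc_inv a b c) \<longleftrightarrow> right_invertible (1 + bc_inv a b c * (\<alpha> - a)))"
proof -
  obtain y where y: "is_bc_inverse a b c y" using assms unfolding bc_invertible_def by blast
  have "bc_inv a b c = y" unfolding bc_inv_def
    using y bc_unique by (metis the_equality)
  thus ?thesis using main[OF y] by simp
qed

end
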